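(* Let $m,n$ be positive integers and $\mathbf a,\mathbf b\in\mathbb Z^{m+n-2}$. If $\mathbf a\succeq\mathbf b$, then $p_{A^{m,n}}(\mathbf a)\ge p_{A^{m,n}}(\mathbf b)$.
   Context: $\mathbf u\succeq\mathbf v$ means $u_i\ge v_i$ for every coordinate $i$. Vector partition function: for a $d\times r$ integer matrix $A$ with $\ker A\cap\mathbb R^r_{\ge0}=\{0\}$, $p_A(\mathbf b)=\#\{\mathbf x\in\mathbb Z^r_{\ge0}:A\mathbf x=\mathbf b\}$. Variables $s_0,\dots,s_{m-1},t_1,\dots,t_{n-2}$; $T=t_1\cdots t_{n-2}$; $x_i=s_1\cdots s_iT^i$ ($1\le i\le m-1$), $y_j=s_0s_1\cdots s_{m-1}T^{m-1}t_1\cdots t_{j-1}$ ($1\le j\le n-1$); $e(M)\in\mathbb Z^{m+n-2}$ is the exponent vector of a Laurent monomial $M$ (coordinates $s_0,\dots,s_{m-1},t_1,\dots,t_{n-2}$). $A^{m,n}$ is the $(m+n-2)\times(\binom{mn}2-\binom m2-\binom n2)$ matrix whose columns are the exponent vectors of the following monomials, with multiplicity: $y_j/x_i$ and $x_iy_j$; $x_i$ ($n-1$ times each); $y_j$ ($m-1$ times each); $x_iy_j/x_k$ ($i\ne k$); $x_iy_j/y_k$ ($j\ne k$); $x_ky_l/(x_iy_j)$ ($i<k$, $j\ne l$); $x_k/x_i$ ($i<k$, $n-1$ times each); $y_l/y_j$ ($j<l$, $m-1$ times each); here $i,k\in\{1,\dots,m-1\}$ and $j,l\in\{1,\dots,n-1\}$.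 *)

theory Defs
  imports Main
begin

text \<open>A matrix with d rows and r columns is given as the
list of its r columns, each an int list of length d.\<close>

definition vpf :: "int list list \<Rightarrow> int list \<Rightarrow> nat" where
  "vpf cols b = card {x :: nat list. length x = length cols \<and>
      (\<forall>c < length b. (\<Sum>k < length cols. int (x ! k) * (cols ! k ! c)) = b ! c)}"

text \<open>Coordinates of exponent vectors (for m, n >= 2), indexed 0 .. m+n-3:
coordinate c < m is s_c (c = 0..m-1); coordinate m + (j-1) is t_j (j = 1..n-2).
Exponent vectors of Laurent monomials are represented as functions nat => int.\<close>

definition T_exp :: "nat \<Rightarrow> nat \<Rightarrow> nat \<Rightarrow> int" where
  "T_exp m n = (\<lambda>c. if m \<le> c \<and> c < m + n - 2 then 1 else 0)"

text \<open>x_i = s_1 ... s_i T^i\<close>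
definition x_exp :: "nat \<Rightarrow> nat \<Rightarrow> nat \<Rightarrow> nat \<Rightarrow> int" where
  "x_exp m n i = (\<lambda>c. (if 1 \<le> c \<and> c \<le> i then 1 else 0) + int i * T_exp m n c)"

text \<open>y_j = s_0 s_1 ... s_{m-1} T^{m-1} t_1 ... t_{j-1}\<close>
definition y_exp :: "nat \<Rightarrow> nat \<Rightarrow> nat \<Rightarrow> nat \<Rightarrow> int" where
  "y_exp m n j = (\<lambda>c. (if c < m then 1 else 0) + int (m - 1) * T_exp m n c
                      + (if m \<le> c \<and> c < m + j - 1 then 1 else 0))"

definition eadd :: "(nat \<Rightarrow> int) \<Rightarrow> (nat \<Rightarrow> int) \<Rightarrow> nat \<Rightarrow> int" where
  "eadd u v = (\<lambda>c. u c + v c)"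

definition esub :: "(nat \<Rightarrow> int) \<Rightarrow> (nat \<Rightarrow> int) \<Rightarrow> nat \<Rightarrow> int" where
  "esub u v = (\<lambda>c. u c - v c)"

definition Acols_exp :: "nat \<Rightarrow> nat \<Rightarrow> (nat \<Rightarrow> int) list" where
  "Acols_exp m n = (let X = x_exp m n; Y = y_exp m n; I = [1..<m]; J = [1..<n] in
       [esub (Y j) (X i). i \<leftarrow> I, j \<leftarrow> J]
     @ [eadd (X i) (Y j). i \<leftarrow> I, j \<leftarrow> J]
     @ concat [replicate (n - 1) (X i). i \<leftarrow> I]
     @ concat [replicate (m - 1) (Y j). j \<leftarrow> J]
     @ [esub (eadd (X i) (Y j)) (X k). i \<leftarrow> I, j \<leftarrow> J, k \<leftarrow> I, i \<noteq> k]
     @ [esub (eadd (X i) (Y j)) (Y k). i \<leftarrow> I, j \<leftarrow> J, k \<leftarrow> J, j \<noteq> k]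
     @ [esub (eadd (X k) (Y l)) (eadd (X i) (Y j)). i \<leftarrow> I, k \<leftarrow> I, j \<leftarrow> J, l \<leftarrow> J, i < k, j \<noteq> l]
     @ concat [replicate (n - 1) (esub (X k) (X i)). i \<leftarrow> I, k \<leftarrow> I, i < k]
     @ concat [replicate (m - 1) (esub (Y l) (Y j)). j \<leftarrow> J, l \<leftarrow> J, j < l])"

definition A_mn :: "nat \<Rightarrow> nat \<Rightarrow> int list list" where
  "A_mn m n = map (\<lambda>v. map v [0..<m + n - 2]) (Acols_exp m n)"

end

theory Submission
  imports Defs
begin
definition solset :: "int list list \<Rightarrow> int list \<Rightarrow> nat list set" where
  "solset cols b = {x :: nat list. length x = length cols \<and>
      (\<forall>c < length b. (\<Sum>k < length cols. int (x ! k) * (cols ! k ! c)) = b ! c)}"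

lemma vpf_solset: "vpf cols b = card (solset cols b)"
  by (simp add: vpf_def solset_def)

lemma finite_solset:
  assumes W: "\<forall>k<length cols. (\<Sum>c<length b. W c * cols ! k ! c) \<ge> 1"
  shows "finite (solset cols b)"
proof -
  define B where "B = (\<Sum>c<length b. W c * b ! c)"
  have key: "x ! k \<le> nat B" if x: "x \<in> solset cols b" and k: "k < length cols" for x k
  proof -
    have eq: "(\<Sum>c<length b. W c * b ! c) = (\<Sum>kk<length cols. int (x ! kk) * (\<Sum>c<length b. W c * cols ! kk ! c))"
    proof -
      have "(\<Sum>c<length b. W c * b ! c) = (\<Sum>c<length b. W c * (\<Sum>kk < length cols. int (x ! kk) * (cols ! kk ! c)))"
        using x by (auto simp: solset_def)
      also have "\<dots> = (\<Sum>c<length b. \<Sum>kk < length cols. int (x ! kk) * (W c * cols ! kk ! c))"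
        by (simp add: sum_distrib_left algebra_simps)
      also have "\<dots> = (\<Sum>kk < length cols. \<Sum>c<length b. int (x ! kk) * (W c * cols ! kk ! c))"
        by (rule sum.swap)
      also have "\<dots> = (\<Sum>kk<length cols. int (x ! kk) * (\<Sum>c<length b. W c * cols ! kk ! c))"
        by (simp add: sum_distrib_left)
      finally show ?thesis .
    qed
    have nn: "\<forall>kk\<in>{..<length cols}. 0 \<le> int (x ! kk) * (\<Sum>c<length b. W c * cols ! kk ! c)"
      using W by (smt (verit) lessThan_iff of_nat_0_le_iff zero_le_mult_iff)
    have "int (x ! k) * (\<Sum>c<length b. W c * cols ! k ! c) \<le> B"
      unfolding B_def eq using k nn by (intro member_le_sum) auto
    moreover have "int (x ! k) \<le> int (x ! k) * (\<Sum>c<length b. W c * cols ! k ! c)"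
      using W k by (simp add: mult_le_cancel_left1)
    ultimately show ?thesis by linarith
  qed
  have "solset cols b \<subseteq> {x. set x \<subseteq> {0..nat B} \<and> length x = length cols}"
    using key by (auto simp: solset_def in_set_conv_nth) 
  moreover have "finite {x. set x \<subseteq> {0..nat B} \<and> length x = length cols}"
    by (rule finite_lists_length_eq) simp
  ultimately show ?thesis by (rule finite_subset)
qed

lemma vpf_step:
  assumes fin: "finite (solset cols (b[c := b!c + 1]))"
    and k: "k < length cols" and c: "c < length b"
    and unit: "\<forall>c'<length b. cols!k!c' = (if c' = c then 1 else 0)"
  shows "vpf cols b \<le> vpf cols (b[c := b!c + 1])"
proof -
  let ?f = "\<lambda>x::nat list. x[k := x!k + 1]"
  have "?f ` solset cols b \<subseteq> solset cols (b[c := b!c + 1])"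
  proof
    fix y assume "y \<in> ?f ` solset cols b"
    then obtain x where x: "x \<in> solset cols b" and y: "y = ?f x" by auto
    have lx: "length x = length cols" using x by (simp add: solset_def)
    have "(\<Sum>kk < length cols. int (y ! kk) * (cols ! kk ! c')) = b[c := b!c + 1] ! c'"
      if c': "c' < length b" for c'
    proof -
      have "(\<Sum>kk < length cols. int (y ! kk) * (cols ! kk ! c')) =
           (\<Sum>kk < length cols. int (x ! kk) * (cols ! kk ! c') + (if kk = k then cols ! kk ! c' else 0))"
        by (rule sum.cong) (auto simp: y lx nth_list_update algebra_simps)
      also have "\<dots> = (\<Sum>kk < length cols. int (x ! kk) * (cols ! kk ! c')) + cols ! k ! c'"
        using k by (simp add: sum.distrib)
      also have "\<dots> = b ! c' + cols ! k ! c'" using x c' by (simp add: solset_def)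
      also have "\<dots> = b[c := b!c + 1] ! c'" using unit c' c by (auto simp: nth_list_update)
      finally show ?thesis .
    qed
    then show "y \<in> solset cols (b[c := b!c + 1])" using lx by (simp add: solset_def y)
  qed
  moreover have "inj_on ?f (solset cols b)"
  proof
    fix x x' assume x: "x \<in> solset cols b" and x': "x' \<in> solset cols b" and e: "?f x = ?f x'"
    have l: "length x = length x'" using x x' by (simp add: solset_def)
    show "x = x'"
    proof (rule nth_equalityI)
      show "length x = length x'" by (rule l)
      fix i assume i: "i < length x"
      have "?f x ! i = ?f x' ! i" using e by simp
      then show "x ! i = x' ! i" using i l by (cases "i = k") auto
    qed
  qed
  ultimately show ?thesis unfolding vpf_solset
    by (metis card_inj_on_le fin)
qed

lemma vpf_mono_gen:
  assumes fin: "\<And>b. length b = d \<Longrightarrow> finite (solset cols b)"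
    and units: "\<And>c. c < d \<Longrightarrow> \<exists>k<length cols. \<forall>c'<d. cols!k!c' = (if c' = c then 1 else 0)"
  shows "length a = d \<Longrightarrow> length b = d \<Longrightarrow> \<forall>c<d. b!c \<le> a!c \<Longrightarrow> vpf cols b \<le> vpf cols a"
proof (induction "\<Sum>c<d. nat (a!c - b!c)" arbitrary: b rule: less_induct)
  case less
  show ?case
  proof (cases "\<forall>c<d. b!c = a!c")
    case True
    then have "b = a" using less.prems by (intro nth_equalityI) auto
    then show ?thesis by simp
  next
    case False
    then obtain c where c: "c < d" "b!c < a!c" using less.prems by force
    define b' where "b' = b[c := b!c + 1]"
    have lb': "length b' = d" using less.prems by (simp add: b'_def)
    have le': "\<forall>c'<d. b'!c' \<le> a!c'" using less.prems c by (auto simp: b'_def nth_list_update)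
    have "(\<Sum>c<d. nat (a!c - b'!c)) < (\<Sum>c<d. nat (a!c - b!c))"
    proof (rule sum_strict_mono_ex1)
      show "\<forall>x\<in>{..<d}. nat (a ! x - b' ! x) \<le> nat (a ! x - b ! x)"
        using less.prems c by (auto simp: b'_def nth_list_update)
      show "\<exists>x\<in>{..<d}. nat (a ! x - b' ! x) < nat (a ! x - b ! x)"
        using c less.prems by (intro bexI[of _ c]) (auto simp: b'_def)
    qed simp
    then have IH: "vpf cols b' \<le> vpf cols a" using less.hyps less.prems lb' le' by blast
    obtain k where k: "k < length cols" "\<forall>c'<d. cols!k!c' = (if c' = c then 1 else 0)"
      using units[OF c(1)] by blast
    have "vpf cols b \<le> vpf cols b'" unfolding b'_def
      using vpf_step[of cols b c k] fin[OF lb'] k c less.prems by (simp add: b'_def)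
    then show ?thesis using IH by linarith
  qed
qed

definition Wt :: "nat \<Rightarrow> nat \<Rightarrow> nat \<Rightarrow> int" where
  "Wt m n c = (if c = 0 then 2 * int n + 1 else if c < m then int n + 2 else 1)"

definition lin :: "nat \<Rightarrow> nat \<Rightarrow> (nat \<Rightarrow> int) \<Rightarrow> int" where
  "lin m n v = (\<Sum>c<m+n-2. Wt m n c * v c)"

lemma lin_eadd: "lin m n (eadd u v) = lin m n u + lin m n v"
  by (simp add: lin_def eadd_def algebra_simps sum.distrib)

lemma lin_esub: "lin m n (esub u v) = lin m n u - lin m n v"
  by (simp add: lin_def esub_def algebra_simps sum_subtractf)

lemma sum_ind: "(\<Sum>c<d. Wt m n c * (if P c then 1 else 0)) = (\<Sum>c\<in>{c. c<d \<and> P c}. Wt m n c)"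
proof -
  have "(\<Sum>c<d. Wt m n c * (if P c then 1 else 0)) = (\<Sum>c<d. if P c then Wt m n c else 0)"
    by (rule sum.cong) auto
  also have "\<dots> = (\<Sum>c\<in>{c\<in>{..<d}. P c}. Wt m n c)"
    by (rule sum.inter_filter[symmetric]) simp
  finally show ?thesis by simp
qed

context
  fixes m n :: nat
  assumes m2: "m \<ge> 2" and n2: "n \<ge> 2"
begin

lemma sumT: "(\<Sum>c<m+n-2. Wt m n c * T_exp m n c) = int n - 2"
proof -
  have "(\<Sum>c<m+n-2. Wt m n c * T_exp m n c) = (\<Sum>c\<in>{c. c<m+n-2 \<and> (m \<le> c \<and> c < m + n - 2)}. Wt m n c)"
    unfolding T_exp_def by (rule sum_ind)
  also have "{c. c<m+n-2 \<and> (m \<le> c \<and> c < m + n - 2)} = {m..<m+n-2}" using m2 by auto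
  also have "(\<Sum>c\<in>{m..<m+n-2}. Wt m n c) = (\<Sum>c\<in>{m..<m+n-2}. 1)"
    by (rule sum.cong) (use m2 in \<open>auto simp: Wt_def\<close>)
  also have "(\<Sum>c\<in>{m..<m+n-2}. (1::int)) = int (n - 2)" using m2 n2 by simp
  finally show ?thesis using n2 by (simp add: of_nat_diff)
qed

lemma sumT': "(\<Sum>c<m+n-2. Wt m n c * (k * T_exp m n c)) = k * (int n - 2)"
  by (simp add: mult.left_commute sum_distrib_left[symmetric] sumT)

lemma lin_x: assumes "1 \<le> i" "i < m" shows "lin m n (x_exp m n i) = 2 * int n * int i"
proof -
  have "lin m n (x_exp m n i) = (\<Sum>c<m+n-2. Wt m n c * (if 1 \<le> c \<and> c \<le> i then 1 else 0))
        + int i * (int n - 2)"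
    by (simp add: lin_def x_exp_def distrib_left sum.distrib sumT')
  also have "(\<Sum>c<m+n-2. Wt m n c * (if 1 \<le> c \<and> c \<le> i then 1 else 0)) = (\<Sum>c\<in>{c. c<m+n-2 \<and> (1 \<le> c \<and> c \<le> i)}. Wt m n c)"
    by (rule sum_ind)
  also have "{c. c<m+n-2 \<and> (1 \<le> c \<and> c \<le> i)} = {1..i}" using assms n2 by auto
  also have "(\<Sum>c\<in>{1..i}. Wt m n c) = (\<Sum>c\<in>{1..i}. int n + 2)"
    by (rule sum.cong) (use assms in \<open>auto simp: Wt_def\<close>)
  finally show ?thesis by (simp add: algebra_simps)
qed

lemma lin_y: assumes "1 \<le> j" "j < n" shows "lin m n (y_exp m n j) = 2 * int n * int m + int j"
proof -
  have "lin m n (y_exp m n j) = (\<Sum>c<m+n-2. Wt m n c * (if c < m then 1 else 0))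
        + int (m - 1) * (int n - 2)
        + (\<Sum>c<m+n-2. Wt m n c * (if m \<le> c \<and> c < m + j - 1 then 1 else 0))"
    by (simp add: lin_def y_exp_def distrib_left sum.distrib sumT')
  also have "(\<Sum>c<m+n-2. Wt m n c * (if c < m then 1 else 0)) = (\<Sum>c\<in>{c. c<m+n-2 \<and> c < m}. Wt m n c)"
    by (rule sum_ind)
  also have "{c. c<m+n-2 \<and> c < m} = insert 0 {1..<m}" using m2 n2 by auto
  also have "(\<Sum>c\<in>insert 0 {1..<m}. Wt m n c) = Wt m n 0 + (\<Sum>c\<in>{1..<m}. int n + 2)"
    by (subst sum.insert) (auto intro!: sum.cong simp: Wt_def)
  also have "(\<Sum>c<m+n-2. Wt m n c * (if m \<le> c \<and> c < m + j - 1 then 1 else 0)) = (\<Sum>c\<in>{c. c<m+n-2 \<and> (m \<le> c \<and> c < m + j - 1)}. Wt m n c)"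
    by (rule sum_ind)
  also have "{c. c<m+n-2 \<and> (m \<le> c \<and> c < m + j - 1)} = {m..<m+j-1}" using assms m2 by auto
  also have "(\<Sum>c\<in>{m..<m+j-1}. Wt m n c) = (\<Sum>c\<in>{m..<m+j-1}. 1)"
    by (rule sum.cong) (use m2 in \<open>auto simp: Wt_def\<close>)
  finally show ?thesis using m2 assms by (simp add: algebra_simps Wt_def of_nat_diff)
qed

lemma A_lem: "x < y \<Longrightarrow> 2*int n*int x + 2*int n \<le> 2*int n*int y"
proof -
  assume "x < y"
  then have "2*int n*(int x + 1) \<le> 2*int n*int y" by (intro mult_left_mono) auto
  then show "2*int n*int x + 2*int n \<le> 2*int n*int y" by (simp add: algebra_simps)
qed

lemma B_lem: "1 \<le> x \<Longrightarrow> 2*int n \<le> 2*int n*int x"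
  using A_lem[of 0 x] by simp

lemma blk1: assumes "v \<in> set ([esub (y_exp m n j) (x_exp m n i). i \<leftarrow> [1..<m], j \<leftarrow> [1..<n]])" shows "lin m n v \<ge> 1"
proof -
  obtain i j where c: "1 \<le> i" "i < m" "1 \<le> j" "j < n" and v: "v = esub (y_exp m n j) (x_exp m n i)"
    using assms by (auto split: if_splits)
  show ?thesis using c n2 m2 A_lem[of i m] unfolding v by (simp add: lin_esub lin_eadd lin_x lin_y)
qed

lemma blk2: assumes "v \<in> set ([eadd (x_exp m n i) (y_exp m n j). i \<leftarrow> [1..<m], j \<leftarrow> [1..<n]])" shows "lin m n v \<ge> 1"
proof -
  obtain i j where c: "1 \<le> i" "i < m" "1 \<le> j" "j < n" and v: "v = eadd (x_exp m n i) (y_exp m n j)"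
    using assms by (auto split: if_splits)
  show ?thesis using c n2 m2 unfolding v
    apply (simp add: lin_esub lin_eadd lin_x lin_y)
    using B_lem[of i] B_lem[of m] c n2 m2 by linarith
qed

lemma blk3: assumes "v \<in> set (concat [replicate (n - 1) (x_exp m n i). i \<leftarrow> [1..<m]])" shows "lin m n v \<ge> 1"
proof -
  obtain i where c: "1 \<le> i" "i < m" and v: "v = x_exp m n i"
    using assms by (auto split: if_splits)
  show ?thesis using c n2 m2 unfolding v
    apply (simp add: lin_esub lin_eadd lin_x lin_y)
    using B_lem[of i] c n2 m2 by linarith
qed

lemma blk4: assumes "v \<in> set (concat [replicate (m - 1) (y_exp m n j). j \<leftarrow> [1..<n]])" shows "lin m n v \<ge> 1"
proof -
  obtain j where c: "1 \<le> j" "j < n" and v: "v = y_exp m n j"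
    using assms by (auto split: if_splits)
  show ?thesis using c n2 m2 unfolding v
    apply (simp add: lin_esub lin_eadd lin_x lin_y)
    using B_lem[of m] c n2 m2 by linarith
qed

lemma blk5: assumes "v \<in> set ([esub (eadd (x_exp m n i) (y_exp m n j)) (x_exp m n k). i \<leftarrow> [1..<m], j \<leftarrow> [1..<n], k \<leftarrow> [1..<m], i \<noteq> k])" shows "lin m n v \<ge> 1"
proof -
  obtain i j k where c: "1 \<le> i" "i < m" "1 \<le> j" "j < n" "1 \<le> k" "k < m" and v: "v = esub (eadd (x_exp m n i) (y_exp m n j)) (x_exp m n k)"
    using assms by (auto split: if_splits)
  show ?thesis using c n2 m2 unfolding v
    apply (simp add: lin_esub lin_eadd lin_x lin_y)
    using A_lem[of k m] B_lem[of i] c n2 m2 by linarith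
qed

lemma blk6: assumes "v \<in> set ([esub (eadd (x_exp m n i) (y_exp m n j)) (y_exp m n k). i \<leftarrow> [1..<m], j \<leftarrow> [1..<n], k \<leftarrow> [1..<n], j \<noteq> k])" shows "lin m n v \<ge> 1"
proof -
  obtain i j k where c: "1 \<le> i" "i < m" "1 \<le> j" "j < n" "1 \<le> k" "k < n" and v: "v = esub (eadd (x_exp m n i) (y_exp m n j)) (y_exp m n k)"
    using assms by (auto split: if_splits)
  show ?thesis using c n2 m2 unfolding v
    apply (simp add: lin_esub lin_eadd lin_x lin_y)
    using B_lem[of i] c n2 m2 by linarith
qed

lemma blk7: assumes "v \<in> set ([esub (eadd (x_exp m n k) (y_exp m n l)) (eadd (x_exp m n i) (y_exp m n j)). i \<leftarrow> [1..<m], k \<leftarrow> [1..<m], j \<leftarrow> [1..<n], l \<leftarrow> [1..<n], i < k, j \<noteq> l])" shows "lin m n v \<ge> 1"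
proof -
  obtain i k j l where c: "1 \<le> i" "i < k" "k < m" "1 \<le> j" "j < n" "1 \<le> l" "l < n" and v: "v = esub (eadd (x_exp m n k) (y_exp m n l)) (eadd (x_exp m n i) (y_exp m n j))"
    using assms by (auto split: if_splits)
  show ?thesis using c n2 m2 A_lem[of i k] unfolding v by (simp add: lin_esub lin_eadd lin_x lin_y)
qed

lemma blk8: assumes "v \<in> set (concat [replicate (n - 1) (esub (x_exp m n k) (x_exp m n i)). i \<leftarrow> [1..<m], k \<leftarrow> [1..<m], i < k])" shows "lin m n v \<ge> 1"
proof -
  obtain i k where c: "1 \<le> i" "i < k" "k < m" and v: "v = esub (x_exp m n k) (x_exp m n i)"
    using assms by (auto split: if_splits)
  show ?thesis using c n2 m2 A_lem[of i k] unfolding v by (simp add: lin_esub lin_eadd lin_x lin_y)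
qed

lemma blk9: assumes "v \<in> set (concat [replicate (m - 1) (esub (y_exp m n l) (y_exp m n j)). j \<leftarrow> [1..<n], l \<leftarrow> [1..<n], j < l])" shows "lin m n v \<ge> 1"
proof -
  obtain j l where c: "1 \<le> j" "j < l" "l < n" and v: "v = esub (y_exp m n l) (y_exp m n j)"
    using assms by (auto split: if_splits)
  show ?thesis using c n2 m2  unfolding v by (simp add: lin_esub lin_eadd lin_x lin_y)
qed

lemma col_pos: assumes "v \<in> set (Acols_exp m n)" shows "lin m n v \<ge> 1"
  using assms unfolding Acols_exp_def Let_def set_append Un_iff
  apply (elim disjE)
  apply (erule blk1)
  apply (erule blk2)
  apply (erule blk3)
  apply (erule blk4)
  apply (erule blk5)
  apply (erule blk6)
  apply (erule blk7)
  apply (erule blk8)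
  apply (erule blk9)
  done

lemma mem1: "esub (y_exp m n 1) (x_exp m n (m-1)) \<in> set (Acols_exp m n)"
  unfolding Acols_exp_def Let_def set_append
  apply (rule UnI1)
  using m2 n2 apply simp
  apply (rule bexI[where x="m-1"])
  apply (rule image_eqI[where x=1])
  apply auto
  done

lemma mem2: "1 \<le> j \<Longrightarrow> j + 1 < n \<Longrightarrow> esub (y_exp m n (j+1)) (y_exp m n j) \<in> set (Acols_exp m n)"
  unfolding Acols_exp_def Let_def set_append
  apply (rule UnI2)
  apply (rule UnI2)
  apply (rule UnI2)
  apply (rule UnI2)
  apply (rule UnI2)
  apply (rule UnI2)
  apply (rule UnI2)
  apply (rule UnI2)
  using m2 n2 apply simp
  apply (rule bexI[where x=j])
  apply (rule bexI[where x="Suc j"])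
  apply auto
  done

lemma mem3: "n = 2 \<Longrightarrow> x_exp m n 1 \<in> set (Acols_exp m n)"
  unfolding Acols_exp_def Let_def set_append
  apply (rule UnI2)
  apply (rule UnI2)
  apply (rule UnI1)
  using m2 n2 apply simp
  done

lemma mem4: "2 \<le> k \<Longrightarrow> k < m \<Longrightarrow> esub (x_exp m n k) (x_exp m n (k-1)) \<in> set (Acols_exp m n)"
  unfolding Acols_exp_def Let_def set_append
  apply (rule UnI2)
  apply (rule UnI2)
  apply (rule UnI2)
  apply (rule UnI2)
  apply (rule UnI2)
  apply (rule UnI2)
  apply (rule UnI2)
  apply (rule UnI1)
  using m2 n2 apply simp
  apply (rule bexI[where x="k-1"])
  apply (rule bexI[where x=k])
  apply auto
  done

lemma mem5: "3 \<le> n \<Longrightarrow> esub (eadd (x_exp m n 1) (y_exp m n 1)) (y_exp m n (n-1)) \<in> set (Acols_exp m n)"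
  unfolding Acols_exp_def Let_def set_append
  apply (rule UnI2)
  apply (rule UnI2)
  apply (rule UnI2)
  apply (rule UnI2)
  apply (rule UnI2)
  apply (rule UnI1)
  using m2 n2 apply simp
  apply (rule bexI[where x=1])
  apply (rule bexI[where x=1])
  apply (rule bexI[where x="n-1"])
  apply auto
  done

lemma mem6: "3 \<le> n \<Longrightarrow> 2 \<le> k \<Longrightarrow> k < m \<Longrightarrow> esub (eadd (x_exp m n k) (y_exp m n 1)) (eadd (x_exp m n (k-1)) (y_exp m n (n-1))) \<in> set (Acols_exp m n)"
  unfolding Acols_exp_def Let_def set_append
  apply (rule UnI2)
  apply (rule UnI2)
  apply (rule UnI2)
  apply (rule UnI2)
  apply (rule UnI2)
  apply (rule UnI2)
  apply (rule UnI1)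
  using m2 n2 apply simp
  apply (rule bexI[where x="k-1"])
  apply (rule bexI[where x=k])
  apply simp
  apply (rule bexI[where x="n-1"])
  apply (rule bexI[where x=1])
  apply auto
  done

lemmas ds = esub_def eadd_def x_exp_def y_exp_def T_exp_def

lemma p1: "esub (y_exp m n 1) (x_exp m n (m-1)) c' = (if c' = 0 then 1 else 0)"
  using m2 n2 by (auto simp: ds)
lemma p2: "1 \<le> j \<Longrightarrow> esub (y_exp m n (j+1)) (y_exp m n j) c' = (if c' = m + j - 1 then 1 else 0)"
  using m2 n2 by (auto simp: ds)
lemma p3: "n = 2 \<Longrightarrow> x_exp m n 1 c' = (if c' = 1 then 1 else 0)"
  using m2 n2 by (auto simp: ds)
lemma p4: "n = 2 \<Longrightarrow> 2 \<le> k \<Longrightarrow> esub (x_exp m n k) (x_exp m n (k-1)) c' = (if c' = k then 1 else 0)"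
  using m2 n2 by (auto simp: ds)
lemma p5: "3 \<le> n \<Longrightarrow> esub (eadd (x_exp m n 1) (y_exp m n 1)) (y_exp m n (n-1)) c' = (if c' = 1 then 1 else 0)"
  using m2 n2 by (auto simp: ds)
lemma p6: "3 \<le> n \<Longrightarrow> 2 \<le> k \<Longrightarrow> esub (eadd (x_exp m n k) (y_exp m n 1)) (eadd (x_exp m n (k-1)) (y_exp m n (n-1))) c' = (if c' = k then 1 else 0)"
  using m2 n2 by (auto simp: ds of_nat_diff)

lemma unit_v: assumes c: "c < m+n-2" shows "\<exists>v\<in>set (Acols_exp m n). \<forall>c'. v c' = (if c' = c then 1 else 0)"
proof -
  consider "c = 0" | "1 \<le> c" "c < m" | "m \<le> c" by linarith
  then show ?thesis
  proof cases
    case 1 then show ?thesis by (intro bexI[OF _ mem1] allI) (simp only: p1)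
  next
    case 2
    show ?thesis
    proof (cases "n = 2")
      case nn: True
      show ?thesis
      proof (cases "c = 1")
        case True then show ?thesis by (intro bexI[OF _ mem3[OF nn]] allI) (simp only: p3[OF nn] True)
      next
        case False then have c2: "2 \<le> c" using 2 by linarith
        show ?thesis by (intro bexI[OF _ mem4[OF c2 2(2)]] allI) (simp only: p4[OF nn c2])
      qed
    next
      case False
      then have n3: "3 \<le> n" using n2 by linarith
      show ?thesis
      proof (cases "c = 1")
        case True then show ?thesis by (intro bexI[OF _ mem5[OF n3]] allI) (simp only: p5[OF n3] True)
      next
        case False then have c2: "2 \<le> c" using 2 by linarith
        show ?thesis by (intro bexI[OF _ mem6[OF n3 c2 2(2)]] allI) (simp only: p6[OF n3 c2])
      qed
    qed
  next
    case 3
    define j where "j = c - m + 1"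
    have j: "1 \<le> j" "j + 1 < n" "c = m + j - 1" using 3 c by (auto simp: j_def)
    show ?thesis by (intro bexI[OF _ mem2[OF j(1,2)]] allI) (simp only: p2[OF j(1)] j(3))
  qed
qed

end

lemma A_mn_len: "length (A_mn m n) = length (Acols_exp m n)"
  by (simp add: A_mn_def)

lemma A_mn_nth: "k < length (Acols_exp m n) \<Longrightarrow> c < m + n - 2 \<Longrightarrow> A_mn m n ! k ! c = (Acols_exp m n ! k) c"
  by (simp add: A_mn_def)

theorem mainTheorem12:
  fixes m n :: nat and a b :: "int list"
  assumes "m \<ge> 2" and "n \<ge> 2"
    and "length a = m + n - 2" and "length b = m + n - 2"
    and "\<forall>c < m + n - 2. a ! c \<ge> b ! c"
  shows "vpf (A_mn m n) a \<ge> vpf (A_mn m n) b"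
proof -
  have fin: "finite (solset (A_mn m n) b')" if lb: "length b' = m + n - 2" for b'
  proof (rule finite_solset[where W = "Wt m n"], intro allI impI)
    fix k assume k: "k < length (A_mn m n)"
    then have k': "k < length (Acols_exp m n)" by (simp add: A_mn_len)
    have "(\<Sum>c<length b'. Wt m n c * A_mn m n ! k ! c) = lin m n (Acols_exp m n ! k)"
      unfolding lin_def lb by (rule sum.cong) (auto simp: A_mn_nth[OF k'])
    also have "\<dots> \<ge> 1" using col_pos[OF assms(1,2)] k' by simp
    finally show "(\<Sum>c<length b'. Wt m n c * A_mn m n ! k ! c) \<ge> 1" .
  qed
  have units: "\<exists>k<length (A_mn m n). \<forall>c'<m+n-2. A_mn m n ! k ! c' = (if c' = c then 1 else 0)"
    if c: "c < m + n - 2" for c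
  proof -
    obtain v where v: "v \<in> set (Acols_exp m n)" "\<forall>c'. v c' = (if c' = c then 1 else 0)"
      using unit_v[OF assms(1,2) c] by blast
    then obtain k where k: "k < length (Acols_exp m n)" "Acols_exp m n ! k = v"
      by (auto simp: in_set_conv_nth)
    show ?thesis using k v by (intro exI[of _ k]) (auto simp: A_mn_len A_mn_nth)
  qed
  show ?thesis
    using vpf_mono_gen[of "m+n-2" "A_mn m n" a b, OF fin units] assms by simp
qed

end
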